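(* Let $\Omega$ be a locally compact Hausdorff space and $\mu$ a nonnegative Radon measure on $\Omega$. Then for each $g\in L^\infty(\Omega,\mu)$, the set $$\Gamma_g:=\big\{f\in L^\infty(\Omega,\mu):\ |f|\geq|g|\ \ \mu\text{-a.e.}\big\}$$ is not $\sigma$-porous in $L^\infty(\Omega,\mu)$.
   Context: Porosity: Let $X$ be a metric space and $0<\lambda<1$. A set $E\subseteq X$ is $\lambda$-porous at $x\in E$ if for each $\delta>0$ there is $y\in B(x;\delta)\setminus\{x\}$ with $B(y;\lambda\, d(x,y))\cap E=\varnothing$; $E$ is $\lambda$-porous if it is $\lambda$-porous at each of its points; $E$ is $\sigma$-$\lambda$-porous if it is a countable union of $\lambda$-porous subsets of $X$. A set is called $\sigma$-porous if it is $\sigma$-$\lambda$-porous for some $\lambda\in(0,1)$; "not $\sigma$-porous" means not $\sigma$-$\lambda$-porous for any $\lambda\in(0,1)$. *)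

theory Defs
  imports "HOL-Analysis.Analysis" "HOL-Probability.Essential_Supremum"
begin

definition radon_measure :: "'a::t2_space measure \<Rightarrow> bool" where
  "radon_measure M \<longleftrightarrow>
     sets M = sets borel \<and>
     (\<forall>K. compact K \<longrightarrow> emeasure M K < \<infinity>) \<and>
     (\<forall>A\<in>sets borel. emeasure M A = (INF U\<in>{U. open U \<and> A \<subseteq> U}. emeasure M U)) \<and>
     (\<forall>U. open U \<longrightarrow> emeasure M U = (SUP K\<in>{K. compact K \<and> K \<subseteq> U}. emeasure M K))"

definition Linf :: "'a measure \<Rightarrow> ('a \<Rightarrow> real) set" where
  "Linf M = {f. f \<in> borel_measurable M \<and> (\<exists>C. AE x in M. \<bar>f x\<bar> \<le> C)}"

definition Linf_dist :: "'a measure \<Rightarrow> ('a \<Rightarrow> real) \<Rightarrow> ('a \<Rightarrow> real) \<Rightarrow> real" where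
  "Linf_dist M f g = real_of_ereal (esssup M (\<lambda>x. ereal \<bar>f x - g x\<bar>))"

text \<open>Porosity in a (pseudo)metric space with carrier S and distance d.
  Points at distance 0 are identified (as in the quotient space L-infinity),
  so "y different from x" reads d x y > 0.\<close>
definition porous_at :: "'b set \<Rightarrow> ('b \<Rightarrow> 'b \<Rightarrow> real) \<Rightarrow> real \<Rightarrow> 'b set \<Rightarrow> 'b \<Rightarrow> bool" where
  "porous_at S d lam E x \<longleftrightarrow>
     (\<forall>\<delta>>0. \<exists>y\<in>S. 0 < d x y \<and> d x y < \<delta> \<and>
        {z\<in>S. d y z < lam * d x y} \<inter> E = {})"

definition porous :: "'b set \<Rightarrow> ('b \<Rightarrow> 'b \<Rightarrow> real) \<Rightarrow> real \<Rightarrow> 'b set \<Rightarrow> bool" where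
  "porous S d lam E \<longleftrightarrow> E \<subseteq> S \<and> (\<forall>x\<in>E. porous_at S d lam E x)"

definition sigma_porous :: "'b set \<Rightarrow> ('b \<Rightarrow> 'b \<Rightarrow> real) \<Rightarrow> real \<Rightarrow> 'b set \<Rightarrow> bool" where
  "sigma_porous S d lam E \<longleftrightarrow> (\<exists>A :: nat \<Rightarrow> 'b set. (\<forall>n. porous S d lam (A n)) \<and> E = (\<Union>n. A n))"

end

theory Submission
  imports Defs
begin

lemma Linf_meas: "f \<in> Linf M \<Longrightarrow> f \<in> borel_measurable M"
  by (simp add: Linf_def)

lemma Linf_bnd: "f \<in> Linf M \<Longrightarrow> \<exists>C. AE x in M. \<bar>f x\<bar> \<le> C"
  by (simp add: Linf_def)

lemma Linf_dist_le:
  assumes "f \<in> borel_measurable M" "g \<in> borel_measurable M" "0 \<le> c"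
    and "AE x in M. \<bar>f x - g x\<bar> \<le> c"
  shows "Linf_dist M f g \<le> c"
proof -
  have m: "(\<lambda>x. ereal \<bar>f x - g x\<bar>) \<in> borel_measurable M" using assms by measurable
  have "esssup M (\<lambda>x. ereal \<bar>f x - g x\<bar>) \<le> ereal c"
    by (rule esssup_I[OF m]) (use assms(4) in auto)
  then show ?thesis unfolding Linf_dist_def using assms(3)
    by (cases "esssup M (\<lambda>x. ereal \<bar>f x - g x\<bar>)") auto
qed

lemma Linf_dist_AE:
  assumes "f \<in> Linf M" "g \<in> Linf M"
  shows "AE x in M. \<bar>f x - g x\<bar> \<le> Linf_dist M f g"
proof -
  obtain Cf where cf: "AE x in M. \<bar>f x\<bar> \<le> Cf" using Linf_bnd[OF assms(1)] by blast
  obtain Cg where cg: "AE x in M. \<bar>g x\<bar> \<le> Cg" using Linf_bnd[OF assms(2)] by blast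
  have m: "(\<lambda>x. ereal \<bar>f x - g x\<bar>) \<in> borel_measurable M"
    using Linf_meas[OF assms(1)] Linf_meas[OF assms(2)] by measurable
  have "AE x in M. \<bar>f x - g x\<bar> \<le> Cf + Cg" using cf cg by eventually_elim auto
  then have le: "esssup M (\<lambda>x. ereal \<bar>f x - g x\<bar>) \<le> ereal (Cf + Cg)"
    by (intro esssup_I[OF m]) auto
  have ae: "AE x in M. ereal \<bar>f x - g x\<bar> \<le> esssup M (\<lambda>x. ereal \<bar>f x - g x\<bar>)"
    by (rule esssup_AE)
  show ?thesis
  proof (cases "esssup M (\<lambda>x. ereal \<bar>f x - g x\<bar>)")
    case (real r)
    then show ?thesis using ae unfolding Linf_dist_def by auto
  next
    case PInf then show ?thesis using le by auto
  next
    case MInf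
    then have "AE x in M. False" using ae by auto
    then show ?thesis by (rule AE_mp) auto
  qed
qed

lemma Linf_dist_nonneg:
  assumes "f \<in> Linf M" "g \<in> Linf M"
  shows "0 \<le> Linf_dist M f g"
proof -
  have m: "(\<lambda>x. ereal \<bar>f x - g x\<bar>) \<in> borel_measurable M"
    using Linf_meas[OF assms(1)] Linf_meas[OF assms(2)] by measurable
  have ae: "AE x in M. ereal \<bar>f x - g x\<bar> \<le> esssup M (\<lambda>x. ereal \<bar>f x - g x\<bar>)"
    by (rule esssup_AE)
  show ?thesis
  proof (cases "esssup M (\<lambda>x. ereal \<bar>f x - g x\<bar>)")
    case (real r)
    show ?thesis
    proof (rule ccontr)
      assume "\<not> 0 \<le> Linf_dist M f g"
      then have "r < 0" using real unfolding Linf_dist_def by auto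
      then have "AE x in M. False" by (intro AE_mp[OF ae AE_I2]) (use real in auto)
      then have "emeasure M (space M) = 0" by (simp add: eventually_False ae_filter_eq_bot_iff)
      then have "esssup M (\<lambda>x. ereal \<bar>f x - g x\<bar>) = - \<infinity>" using esssup_zero_space m by blast
      then show False using real by simp
    qed
  qed (auto simp: Linf_dist_def)
qed

lemma Linf_dist_self: "f \<in> Linf M \<Longrightarrow> Linf_dist M f f = 0"
  using Linf_dist_le[of f M f 0] Linf_dist_nonneg[of f M f] Linf_meas[of f M] by auto

lemma Linf_dist_tri:
  assumes "f \<in> Linf M" "g \<in> Linf M" "h \<in> Linf M"
  shows "Linf_dist M f h \<le> Linf_dist M f g + Linf_dist M g h"
proof -
  have ae: "AE x in M. \<bar>f x - h x\<bar> \<le> Linf_dist M f g + Linf_dist M g h"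
    using Linf_dist_AE[OF assms(1,2)] Linf_dist_AE[OF assms(2,3)] by eventually_elim auto
  show ?thesis
    by (rule Linf_dist_le[OF Linf_meas[OF assms(1)] Linf_meas[OF assms(3)] _ ae])
      (use Linf_dist_nonneg[OF assms(1,2)] Linf_dist_nonneg[OF assms(2,3)] in linarith)
qed

lemma step:
  assumes A: "porous (Linf M) (Linf_dist M) lam A" and lam: "0 < lam" "lam < 1"
    and f: "f \<in> Linf M" and r: "0 < r"
  shows "\<exists>f' r'. f' \<in> Linf M \<and> 0 < r' \<and> r' \<le> r / 2 \<and> Linf_dist M f f' + r' \<le> r \<and>
           (\<forall>h\<in>Linf M. Linf_dist M f' h \<le> r' \<longrightarrow> h \<notin> A)"
proof (cases "\<exists>x\<in>A. Linf_dist M f x < r / 2")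
  case False
  show ?thesis
  proof (intro exI conjI ballI impI)
    show "f \<in> Linf M" by fact
    show "0 < r / 4" "r / 4 \<le> r / 2" using r by simp_all
    show "Linf_dist M f f + r / 4 \<le> r" using r Linf_dist_self[OF f] by simp
    fix h assume h: "h \<in> Linf M" "Linf_dist M f h \<le> r / 4"
    show "h \<notin> A"
    proof
      assume "h \<in> A"
      then have "Linf_dist M f h \<ge> r / 2" using False by (meson not_less)
      then show False using h r by linarith
    qed
  qed
next
  case True
  then obtain x where x: "x \<in> A" "Linf_dist M f x < r / 2" by blast
  have xL: "x \<in> Linf M" using A x unfolding porous_def by auto
  have "porous_at (Linf M) (Linf_dist M) lam A x" using A x unfolding porous_def by auto
  moreover have "0 < r / 4" using r by simp
  ultimately obtain y where y: "y \<in> Linf M" "0 < Linf_dist M x y" "Linf_dist M x y < r / 4"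
    "{z\<in>Linf M. Linf_dist M y z < lam * Linf_dist M x y} \<inter> A = {}"
    unfolding porous_at_def by blast
  define r' where "r' = lam * Linf_dist M x y / 2"
  have r'pos: "0 < r'" using lam y unfolding r'_def by auto
  have r'lt: "r' < Linf_dist M x y / 2" using lam y unfolding r'_def by auto
  have r'lt2: "r' < lam * Linf_dist M x y" using lam y unfolding r'_def by auto
  have tri: "Linf_dist M f y \<le> Linf_dist M f x + Linf_dist M x y"
    by (rule Linf_dist_tri[OF f xL y(1)])
  show ?thesis
  proof (intro exI conjI ballI impI)
    show "y \<in> Linf M" by fact
    show "0 < r'" by fact
    show "r' \<le> r / 2" using r'lt y by auto
    show "Linf_dist M f y + r' \<le> r" using tri x r'lt y by auto
    fix h assume "h \<in> Linf M" "Linf_dist M y h \<le> r'"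
    then show "h \<notin> A" using y(4) r'lt2 by auto
  qed
qed

theorem theorem2p7:
  fixes M :: "'a::t2_space measure" and g :: "'a \<Rightarrow> real"
  assumes "locally_compact_space (euclidean :: 'a topology)"
    and "radon_measure M"
    and "g \<in> Linf M"
  shows "\<not> (\<exists>lam. 0 < lam \<and> lam < 1 \<and>
            sigma_porous (Linf M) (Linf_dist M) lam {f \<in> Linf M. AE x in M. \<bar>f x\<bar> \<ge> \<bar>g x\<bar>})"
proof
  assume "\<exists>lam. 0 < lam \<and> lam < 1 \<and>
            sigma_porous (Linf M) (Linf_dist M) lam {f \<in> Linf M. AE x in M. \<bar>f x\<bar> \<ge> \<bar>g x\<bar>}"
  then obtain lam and A :: "nat \<Rightarrow> ('a \<Rightarrow> real) set" where lam: "0 < lam" "lam < 1" and Ap: "\<And>n. porous (Linf M) (Linf_dist M) lam (A n)"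
    and AU: "{f \<in> Linf M. AE x in M. \<bar>f x\<bar> \<ge> \<bar>g x\<bar>} = (\<Union>n. A n)"
    unfolding sigma_porous_def by blast
  let ?d = "Linf_dist M"
  define Q where "Q = (\<lambda>(n::nat, f, r) (f', r'). f' \<in> Linf M \<and> 0 < r' \<and> r' \<le> r / 2 \<and> ?d f f' + r' \<le> r \<and>
           (\<forall>h\<in>Linf M. ?d f' h \<le> r' \<longrightarrow> h \<notin> A n))"
  have "\<forall>p. \<exists>q. (fst (snd p) \<in> Linf M \<and> 0 < snd (snd p)) \<longrightarrow> Q p q"
  proof
    fix p :: "nat \<times> ('a \<Rightarrow> real) \<times> real"
    obtain n f r where p: "p = (n, f, r)" by (cases p) auto
    show "\<exists>q. (fst (snd p) \<in> Linf M \<and> 0 < snd (snd p)) \<longrightarrow> Q p q"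
      using step[OF Ap[of n] lam, of f r] unfolding p Q_def by auto
  qed
  then obtain F where F0: "\<forall>p. (fst (snd p) \<in> Linf M \<and> 0 < snd (snd p)) \<longrightarrow> Q p (F p)"
    by (rule choice[THEN exE])
  have F: "\<And>p. fst (snd p) \<in> Linf M \<Longrightarrow> 0 < snd (snd p) \<Longrightarrow> Q p (F p)"
    using F0 by blast
  obtain K where K: "AE x in M. \<bar>g x\<bar> \<le> K" using Linf_bnd[OF assms(3)] by blast
  define K' where "K' = max K 0"
  have K': "AE x in M. \<bar>g x\<bar> \<le> K'" using K unfolding K'_def by eventually_elim auto
 have K'0: "0 \<le> K'" unfolding K'_def by simp
  define c0 :: "'a \<Rightarrow> real" where "c0 = (\<lambda>x. K' + 1)"
  have c0L: "c0 \<in> Linf M" unfolding Linf_def c0_def by auto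
  define s where "s = rec_nat (c0, 1/4) (\<lambda>n p. F (n, fst p, snd p))"
  define fs where "fs n = fst (s n)" for n
  define rs where "rs n = snd (s n)" for n
  have s0: "fs 0 = c0" "rs 0 = 1/4" unfolding fs_def rs_def s_def by auto
  have sS: "s (Suc n) = F (n, fs n, rs n)" for n unfolding fs_def rs_def s_def by auto
  have inv: "fs n \<in> Linf M \<and> 0 < rs n" for n
  proof (induction n)
    case 0 then show ?case using s0 c0L by auto
  next
    case (Suc n)
    then have "Q (n, fs n, rs n) (s (Suc n))" using F[of "(n, fs n, rs n)"] sS by auto
    then show ?case unfolding Q_def fs_def rs_def by (auto split: prod.splits)
  qed
  have QS: "fs (Suc n) \<in> Linf M \<and> 0 < rs (Suc n) \<and> rs (Suc n) \<le> rs n / 2 \<and>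
      ?d (fs n) (fs (Suc n)) + rs (Suc n) \<le> rs n \<and>
      (\<forall>h\<in>Linf M. ?d (fs (Suc n)) h \<le> rs (Suc n) \<longrightarrow> h \<notin> A n)" for n
  proof -
    have "Q (n, fs n, rs n) (s (Suc n))" using F[of "(n, fs n, rs n)"] sS inv by auto
    then show ?thesis unfolding Q_def fs_def rs_def by (auto split: prod.splits)
  qed
  have rsb: "rs n \<le> (1/2)^n" for n
  proof (induction n)
    case 0 then show ?case using s0 by auto
  next
    case (Suc n) then show ?case using QS[of n] by auto
  qed
  have chain: "?d (fs n) (fs m) + rs m \<le> rs n" if "n \<le> m" for n m
    using that
  proof (induction m rule: dec_induct)
    case base then show ?case using Linf_dist_self[of "fs n" M] inv[of n] by simp
  next
    case (step m)
    have "?d (fs n) (fs (Suc m)) \<le> ?d (fs n) (fs m) + ?d (fs m) (fs (Suc m))"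
      using Linf_dist_tri inv by blast
    then show ?case using step.IH QS[of m] by auto
  qed
  have aeH: "AE x in M. \<forall>n. \<forall>m. \<bar>fs n x - fs m x\<bar> \<le> ?d (fs n) (fs m)"
    unfolding AE_all_countable using Linf_dist_AE inv by blast
  have pw: "\<forall>n. \<bar>fs n x - lim (\<lambda>m. fs m x)\<bar> \<le> rs n"
    if H: "\<forall>n. \<forall>m. \<bar>fs n x - fs m x\<bar> \<le> ?d (fs n) (fs m)" for x
  proof -
    have bd: "\<bar>fs n x - fs m x\<bar> \<le> rs n" if "n \<le> m" for n m
      using H[rule_format, of n m] chain[OF that] inv[of m] by linarith
    have "Cauchy (\<lambda>m. fs m x)"
    proof (rule metric_CauchyI)
      fix e :: real assume e: "0 < e"
      obtain N where N: "(1/2::real)^N < e" using real_arch_pow_inv[OF e, of "1/2"] by auto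
      show "\<exists>N. \<forall>m\<ge>N. \<forall>n\<ge>N. dist (fs m x) (fs n x) < e"
      proof (intro exI allI impI)
        fix m n assume mn: "N \<le> m" "N \<le> n"
        have pm: "(1/2::real)^(min m n) \<le> (1/2)^N"
          by (rule power_decreasing) (use mn in auto)
        have "\<bar>fs m x - fs n x\<bar> \<le> rs (min m n)"
          using bd[of m n] bd[of n m] by (cases "m \<le> n") (auto simp: min_def abs_minus_commute)
        then have "\<bar>fs m x - fs n x\<bar> < e"
          using rsb[of "min m n"] pm N by linarith
        then show "dist (fs m x) (fs n x) < e" by (simp add: dist_real_def)
      qed
    qed
    then have lim: "(\<lambda>m. fs m x) \<longlonglongrightarrow> lim (\<lambda>m. fs m x)"
      using Cauchy_convergent_iff convergent_LIMSEQ_iff by blast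
    show ?thesis
    proof
      fix n
      have "(\<lambda>m. \<bar>fs n x - fs m x\<bar>) \<longlonglongrightarrow> \<bar>fs n x - lim (\<lambda>m. fs m x)\<bar>"
        by (intro tendsto_intros lim)
      then show "\<bar>fs n x - lim (\<lambda>m. fs m x)\<bar> \<le> rs n"
        by (rule LIMSEQ_le_const2) (use bd in auto)
    qed
  qed
  have good: "AE x in M. \<forall>n. \<bar>fs n x - lim (\<lambda>m. fs m x)\<bar> \<le> rs n"
    using aeH by eventually_elim (rule pw)
  define f where "f x = lim (\<lambda>m. fs m x)" for x
  have fm: "f \<in> borel_measurable M"
    unfolding f_def using inv Linf_meas by (intro borel_measurable_lim_metric) auto
  have fL: "f \<in> Linf M"
    unfolding Linf_def
  proof (intro CollectI conjI fm exI)
    show "AE x in M. \<bar>f x\<bar> \<le> K' + 1 + 1/4"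
      using good unfolding f_def by eventually_elim (use s0 K'0 in \<open>auto simp: c0_def dest!: spec[of _ 0]\<close>)
  qed
  have fG: "f \<in> {f \<in> Linf M. AE x in M. \<bar>f x\<bar> \<ge> \<bar>g x\<bar>}"
  proof -
    have "AE x in M. \<bar>f x\<bar> \<ge> \<bar>g x\<bar>"
      using good K' unfolding f_def by eventually_elim (use s0 K'0 in \<open>auto simp: c0_def dest!: spec[of _ 0]\<close>)
    then show ?thesis using fL by auto
  qed
  then obtain n where n: "f \<in> A n" using AU by auto
  have hole: "\<forall>h\<in>Linf M. ?d (fs (Suc n)) h \<le> rs (Suc n) \<longrightarrow> h \<notin> A n"
    using QS[of n] by blast
  have "?d (fs (Suc n)) f \<le> rs (Suc n)"
    by (rule Linf_dist_le) (use good inv[of "Suc n"] Linf_meas[of "fs (Suc n)"] fm in \<open>auto simp: f_def less_imp_le\<close>)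
  then show False using hole fL n by blast
qed

end
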